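(* Let $e_1,e_2$ be a basis of $\mathbb{Z}^2$. Up to isomorphism, the smooth toric varieties admitting a proper birational toric morphism to $\mathbb{A}^2$ and having nef anticanonical divisor are $\mathbb{A}^2$ and the varieties $Z_m$ ($m\ge1$), where $Z_m$ is the toric variety whose fan has maximal cones $\mathrm{cone}(e_1,e_1+e_2)$, $\mathrm{cone}(e_1+e_2,e_1+2e_2)$, $\dots$, $\mathrm{cone}(e_1+(m-1)e_2,e_1+me_2)$, $\mathrm{cone}(e_1+me_2,e_2)$.
   Context: $\mathbb{A}^2$ is the toric variety with fan $\mathrm{cone}(e_1,e_2)$ and its faces; toric varieties birationally proper over $\mathbb{A}^2$ correspond to fans subdividing $\mathrm{cone}(e_1,e_2)$. *)

theory Defs
  imports Main
begin

text \<open>A smooth fan subdividing cone(e1,e2) is encoded by the list of its rays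
  v_0 = e1, v_1, ..., v_(n+1) = e2, ordered counterclockwise; its maximal
  cones are cone(v_i, v_(i+1)).\<close>

type_synonym vec2 = "int \<times> int"

definition det2 :: "vec2 \<Rightarrow> vec2 \<Rightarrow> int" where
  "det2 u w = fst u * snd w - snd u * fst w"

definition smooth_quadrant_fan :: "vec2 list \<Rightarrow> bool" where
  "smooth_quadrant_fan vs \<longleftrightarrow>
     length vs \<ge> 2 \<and> hd vs = (1, 0) \<and> last vs = (0, 1) \<and>
     (\<forall>v\<in>set vs. fst v \<ge> 0 \<and> snd v \<ge> 0) \<and>
     (\<forall>i. Suc i < length vs \<longrightarrow> det2 (vs ! i) (vs ! Suc i) = 1)"

definition max_cones :: "vec2 list \<Rightarrow> vec2 set set" where
  "max_cones vs = {{vs ! i, vs ! Suc i} | i. Suc i < length vs}"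

text \<open>For an interior ray v_i (0 < i < n+1) the divisor D_i is a compact
  torus-invariant curve; v_(i-1) + v_(i+1) = a_i v_i and D_i.D_i = -a_i,
  D_(i-1).D_i = D_(i+1).D_i = 1, and D_j.D_i = 0 otherwise.\<close>
definition self_int :: "vec2 list \<Rightarrow> nat \<Rightarrow> int" where
  "self_int vs i = - (THE a::int.
      fst (vs ! (i - 1)) + fst (vs ! Suc i) = a * fst (vs ! i) \<and>
      snd (vs ! (i - 1)) + snd (vs ! Suc i) = a * snd (vs ! i))"

definition int_num :: "vec2 list \<Rightarrow> nat \<Rightarrow> nat \<Rightarrow> int" where
  "int_num vs j i =
     (if j = i then self_int vs i
      else if j + 1 = i \<or> j = i + 1 then 1 else 0)"

text \<open>The anticanonical divisor is -K = sum of all D_j; it is nef iff its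
  intersection number with every compact torus-invariant curve D_i is >= 0.\<close>
definition nef_anticanonical :: "vec2 list \<Rightarrow> bool" where
  "nef_anticanonical vs \<longleftrightarrow>
     (\<forall>i. 0 < i \<and> Suc i < length vs \<longrightarrow>
        (\<Sum>j<length vs. int_num vs j i) \<ge> 0)"

definition toric_iso :: "vec2 list \<Rightarrow> vec2 list \<Rightarrow> bool" where
  "toric_iso vs ws \<longleftrightarrow>
     (\<exists>a b c d :: int. \<bar>a * d - b * c\<bar> = 1 \<and>
        (\<lambda>S. (\<lambda>(x, y). (a * x + b * y, c * x + d * y)) ` S) ` max_cones vs
          = max_cones ws)"

definition A2_fan :: "vec2 list" where
  "A2_fan = [(1, 0), (0, 1)]"

definition Z_fan :: "nat \<Rightarrow> vec2 list" where
  "Z_fan m = [(1, 0)] @ map (\<lambda>k. (1, int k)) [1..<Suc m] @ [(0, 1)]"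

end

theory Submission
  imports Defs
begin

lemma det_ident1: "det2 u v * fst w + det2 v w * fst u = det2 u w * fst v"
  by (simp add: det2_def algebra_simps)

lemma det_ident2: "det2 u v * snd w + det2 v w * snd u = det2 u w * snd v"
  by (simp add: det2_def algebra_simps)

lemma det_antisym: "det2 q p = - det2 p q"
  by (simp add: det2_def)

lemma det_trans:
  assumes "fst u \<ge> 0" "snd u \<ge> 0" "fst v \<ge> 0" "snd v \<ge> 0" "fst w \<ge> 0" "snd w \<ge> 0"
    and A: "det2 u v > 0" and B: "det2 v w > 0"
  shows "det2 u w > 0"
proof (rule ccontr)
  assume C: "\<not> det2 u w > 0"
  have i1: "det2 u v * fst w + det2 v w * fst u = det2 u w * fst v" by (rule det_ident1)
  have i2: "det2 u v * snd w + det2 v w * snd u = det2 u w * snd v" by (rule det_ident2)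
  have "det2 u w * fst v \<le> 0" using C assms(3) by (simp add: mult_nonpos_nonneg)
  moreover have "det2 u v * fst w \<ge> 0" "det2 v w * fst u \<ge> 0" using A B assms by auto
  ultimately have "det2 u v * fst w = 0" "det2 v w * fst u = 0" using i1 by linarith+
  hence x: "fst w = 0" "fst u = 0" using A B by auto
  have "det2 u w * snd v \<le> 0" using C assms(4) by (simp add: mult_nonpos_nonneg)
  moreover have "det2 u v * snd w \<ge> 0" "det2 v w * snd u \<ge> 0" using A B assms by auto
  ultimately have "det2 u v * snd w = 0" "det2 v w * snd u = 0" using i2 by linarith+
  hence "snd w = 0" "snd u = 0" using A B by auto
  with x have "u = (0,0)" by (simp add: prod_eq_iff)
  hence "det2 u v = 0" by (simp add: det2_def)
  with A show False by simp
qed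

lemma sm_det:
  assumes "smooth_quadrant_fan vs" "Suc i < length vs"
  shows "det2 (vs ! i) (vs ! Suc i) = 1"
  using assms unfolding smooth_quadrant_fan_def by blast

lemma sm_nn:
  assumes "smooth_quadrant_fan vs" "k < length vs"
  shows "fst (vs ! k) \<ge> 0 \<and> snd (vs ! k) \<ge> 0"
proof -
  have "vs ! k \<in> set vs" using assms(2) by (rule nth_mem)
  then show ?thesis using assms(1) unfolding smooth_quadrant_fan_def by blast
qed

lemma det_pos:
  assumes sm: "smooth_quadrant_fan vs"
  shows "i < j \<Longrightarrow> j < length vs \<Longrightarrow> det2 (vs ! i) (vs ! j) > 0"
proof (induction j)
  case 0 then show ?case by simp
next
  case (Suc j)
  have d1: "det2 (vs ! j) (vs ! Suc j) = 1" using sm_det[OF sm Suc.prems(2)] .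
  show ?case
  proof (cases "i = j")
    case True then show ?thesis using d1 by simp
  next
    case False
    hence ij: "i < j" using Suc.prems by simp
    hence "det2 (vs ! i) (vs ! j) > 0" using Suc.IH Suc.prems(2) by simp
    moreover have "fst (vs ! i) \<ge> 0 \<and> snd (vs ! i) \<ge> 0" using sm_nn[OF sm] ij Suc.prems(2) by simp
    moreover have "fst (vs ! j) \<ge> 0 \<and> snd (vs ! j) \<ge> 0" using sm_nn[OF sm] Suc.prems(2) by simp
    moreover have "fst (vs ! Suc j) \<ge> 0 \<and> snd (vs ! Suc j) \<ge> 0" using sm_nn[OF sm] Suc.prems(2) by simp
    ultimately show ?thesis using d1 det_trans[of "vs ! i" "vs ! j" "vs ! Suc j"] by simp
  qed
qed

lemma nth_inj:
  assumes sm: "smooth_quadrant_fan vs" and "i < length vs" "j < length vs"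
  shows "vs ! i = vs ! j \<longleftrightarrow> i = j"
proof
  assume e: "vs ! i = vs ! j"
  show "i = j"
  proof (rule ccontr)
    assume "i \<noteq> j"
    hence "i < j \<or> j < i" by auto
    then show False
    proof
      assume "i < j" then have "det2 (vs!i) (vs!j) > 0" using det_pos[OF sm] assms by auto
      with e show False by (simp add: det2_def)
    next
      assume "j < i" then have "det2 (vs!j) (vs!i) > 0" using det_pos[OF sm] assms by auto
      with e show False by (simp add: det2_def)
    qed
  qed
qed simp

lemma self_int_eq:
  assumes sm: "smooth_quadrant_fan vs" and i: "0 < i" "Suc i < length vs"
  shows "self_int vs i = - det2 (vs ! (i - 1)) (vs ! Suc i)"
proof -
  define u v w where "u = vs ! (i - 1)" "v = vs ! i" "w = vs ! Suc i"
  have h1: "det2 u v = 1" using sm i unfolding smooth_quadrant_fan_def u_v_w_def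
    by (metis Suc_diff_1 Suc_lessD)
  have h2: "det2 v w = 1" using sm i unfolding smooth_quadrant_fan_def u_v_w_def by auto
  have e1: "fst u + fst w = det2 u w * fst v" using det_ident1[of u v w] h1 h2 by simp
  have e2: "snd u + snd w = det2 u w * snd v" using det_ident2[of u v w] h1 h2 by simp
  have vnz: "fst v \<noteq> 0 \<or> snd v \<noteq> 0" using h2 by (auto simp: det2_def)
  have "(THE a::int. fst u + fst w = a * fst v \<and> snd u + snd w = a * snd v) = det2 u w"
  proof (rule the_equality)
    show "fst u + fst w = det2 u w * fst v \<and> snd u + snd w = det2 u w * snd v" using e1 e2 by simp
  next
    fix a assume "fst u + fst w = a * fst v \<and> snd u + snd w = a * snd v"
    with e1 e2 have "a * fst v = det2 u w * fst v" "a * snd v = det2 u w * snd v" by auto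
    with vnz show "a = det2 u w" by auto
  qed
  then show ?thesis unfolding self_int_def u_v_w_def by simp
qed

lemma sum_int_num:
  assumes sm: "smooth_quadrant_fan vs" and i: "0 < i" "Suc i < length vs"
  shows "(\<Sum>j<length vs. int_num vs j i) = 2 - det2 (vs ! (i - 1)) (vs ! Suc i)"
proof -
  have "\<And>j. int_num vs j i = (if j = i then self_int vs i else 0) + (if j = i - 1 then 1 else 0)
           + (if j = Suc i then 1 else 0)"
    using i by (auto simp: int_num_def)
  hence "(\<Sum>j<length vs. int_num vs j i) = (\<Sum>j<length vs. (if j = i then self_int vs i else 0))
      + (\<Sum>j<length vs. (if j = i - 1 then 1 else 0)) + (\<Sum>j<length vs. (if j = Suc i then 1 else 0))"
    by (simp add: sum.distrib)
  also have "\<dots> = self_int vs i + 2" using i by simp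
  finally show ?thesis using self_int_eq[OF assms] by linarith
qed

lemma nef_iff:
  assumes sm: "smooth_quadrant_fan vs"
  shows "nef_anticanonical vs \<longleftrightarrow>
     (\<forall>i. 0 < i \<and> Suc i < length vs \<longrightarrow> det2 (vs ! (i - 1)) (vs ! Suc i) \<le> 2)"
  unfolding nef_anticanonical_def
proof (intro iffI allI impI)
  fix i assume H: "\<forall>i. 0 < i \<and> Suc i < length vs \<longrightarrow> 0 \<le> (\<Sum>j<length vs. int_num vs j i)"
    and i: "0 < i \<and> Suc i < length vs"
  then have "0 \<le> (\<Sum>j<length vs. int_num vs j i)" by blast
  then show "det2 (vs ! (i - 1)) (vs ! Suc i) \<le> 2" using sum_int_num[OF sm] i by simp
next
  fix i assume H: "\<forall>i. 0 < i \<and> Suc i < length vs \<longrightarrow> det2 (vs ! (i - 1)) (vs ! Suc i) \<le> 2"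
    and i: "0 < i \<and> Suc i < length vs"
  then have "det2 (vs ! (i - 1)) (vs ! Suc i) \<le> 2" by blast
  then show "0 \<le> (\<Sum>j<length vs. int_num vs j i)" using sum_int_num[OF sm] i by simp
qed


lemma Z_len: "length (Z_fan m) = m + 2"
  by (simp add: Z_fan_def)

lemma Z_nth:
  assumes "i \<le> m + 1"
  shows "Z_fan m ! i = (if i = 0 then (1, 0) else if i \<le> m then (1, int i) else (0, 1))"
proof (cases i)
  case 0 then show ?thesis by (simp add: Z_fan_def)
next
  case (Suc j)
  show ?thesis
  proof (cases "j < m")
    case True
    have "map (\<lambda>k. (1::int, int k)) [1..<Suc m] ! j = (1, int (Suc j))"
      using True by (simp add: nth_map nth_upt del: upt_Suc)
    then have "Z_fan m ! i = (1, int (Suc j))" using Suc True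
      by (simp add: Z_fan_def nth_append del: upt_Suc)
    then show ?thesis using Suc True by simp
  next
    case False
    then have "j = m" using Suc assms by simp
    then show ?thesis using Suc by (simp add: Z_fan_def nth_append)
  qed
qed

lemma Z_smooth:
  assumes "m \<ge> 1"
  shows "smooth_quadrant_fan (Z_fan m)"
  unfolding smooth_quadrant_fan_def
proof (intro conjI ballI allI impI)
  show "2 \<le> length (Z_fan m)" by (simp add: Z_len)
  show "hd (Z_fan m) = (1, 0)" by (simp add: Z_fan_def)
  show "last (Z_fan m) = (0, 1)" by (simp add: Z_fan_def)
next
  fix v assume "v \<in> set (Z_fan m)"
  then obtain i where i: "i < length (Z_fan m)" "v = Z_fan m ! i" by (metis in_set_conv_nth)
  then show "0 \<le> fst v" "0 \<le> snd v" using Z_nth[of i m] by (auto simp: Z_len)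
next
  fix i assume i: "Suc i < length (Z_fan m)"
  then have "Suc i \<le> m + 1" by (simp add: Z_len)
  then show "det2 (Z_fan m ! i) (Z_fan m ! Suc i) = 1"
    using Z_nth[of i m] Z_nth[of "Suc i" m] assms by (auto simp: det2_def)
qed

lemma Z_nef:
  assumes "m \<ge> 1"
  shows "nef_anticanonical (Z_fan m)"
  unfolding nef_iff[OF Z_smooth[OF assms]]
proof (intro allI impI)
  fix i assume i: "0 < i \<and> Suc i < length (Z_fan m)"
  then have im: "i \<le> m" by (simp add: Z_len)
  obtain j where j: "i = Suc j" using i by (cases i) auto
  have a: "Z_fan m ! (i - 1) = (if j = 0 then (1, 0) else (1, int j))"
    using Z_nth[of j m] im j by simp
  show "det2 (Z_fan m ! (i - 1)) (Z_fan m ! Suc i) \<le> 2"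
  proof (cases "Suc i \<le> m")
    case True
    then have "Z_fan m ! Suc i = (1, int (Suc i))" using Z_nth[of "Suc i" m] by simp
    then show ?thesis using a j by (simp add: det2_def)
  next
    case False
    then have "Z_fan m ! Suc i = (0, 1)" using Z_nth[of "Suc i" m] im by simp
    then show ?thesis using a j by (simp add: det2_def)
  qed
qed

lemma A2_smooth: "smooth_quadrant_fan A2_fan"
  unfolding smooth_quadrant_fan_def A2_fan_def
  by (auto simp: det2_def less_Suc_eq)

lemma A2_nef: "nef_anticanonical A2_fan"
  unfolding nef_anticanonical_def A2_fan_def by auto


lemma mc_iff: "X \<in> max_cones vs \<longleftrightarrow> (\<exists>i. X = {vs ! i, vs ! Suc i} \<and> Suc i < length vs)"
  by (auto simp: max_cones_def)

lemma iso_nef: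
  assumes smv: "smooth_quadrant_fan vs" and smw: "smooth_quadrant_fan ws"
    and iso: "toric_iso vs ws" and nefw: "nef_anticanonical ws"
  shows "nef_anticanonical vs"
proof -
  obtain a b c d :: int where D: "\<bar>a * d - b * c\<bar> = 1" and
    img: "(\<lambda>S. (\<lambda>(x, y). (a * x + b * y, c * x + d * y)) ` S) ` max_cones vs = max_cones ws"
  proof -
    have "\<exists>a b c d :: int. \<bar>a * d - b * c\<bar> = 1 \<and>
        (\<lambda>S. (\<lambda>(x, y). (a * x + b * y, c * x + d * y)) ` S) ` max_cones vs = max_cones ws"
      using iso by (simp only: toric_iso_def)
    then show ?thesis using that by (elim exE conjE) assumption
  qed
  define L where "L = (\<lambda>(x::int, y::int). (a * x + b * y, c * x + d * y))"
  have Leq: "(\<lambda>(x, y). (a * x + b * y, c * x + d * y)) = L" by (simp add: L_def)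
  have Lapp: "\<And>p. L p = (a * fst p + b * snd p, c * fst p + d * snd p)"
    by (simp add: L_def split_beta)
  have img': "\<And>S. S \<in> max_cones vs \<Longrightarrow> L ` S \<in> max_cones ws"
  proof -
    fix S assume "S \<in> max_cones vs"
    then have "(\<lambda>S. L ` S) S \<in> (\<lambda>S. L ` S) ` max_cones vs" by (rule imageI)
    then show "L ` S \<in> max_cones ws" using img unfolding Leq by simp
  qed
  have detL: "\<And>p q. det2 (L p) (L q) = (a * d - b * c) * det2 p q"
    unfolding Lapp det2_def by (simp add: algebra_simps)
  have Linj: "\<And>p q. L p = L q \<Longrightarrow> p = q"
  proof -
    fix p q assume e: "L p = L q"
    then have e1: "a * (fst p - fst q) + b * (snd p - snd q) = 0"
      and e2: "c * (fst p - fst q) + d * (snd p - snd q) = 0"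
      unfolding Lapp by (simp_all add: algebra_simps)
    have "d * (a * (fst p - fst q) + b * (snd p - snd q)) - b * (c * (fst p - fst q) + d * (snd p - snd q))
        = (a * d - b * c) * (fst p - fst q)" by (simp add: algebra_simps)
    with e1 e2 have "(a * d - b * c) * (fst p - fst q) = 0" by simp
    with D have x: "fst p = fst q" by (metis abs_0 eq_iff_diff_eq_0 mult_eq_0_iff zero_neq_one)
    have "a * (c * (fst p - fst q) + d * (snd p - snd q)) - c * (a * (fst p - fst q) + b * (snd p - snd q))
        = (a * d - b * c) * (snd p - snd q)" by (simp add: algebra_simps)
    with e1 e2 have "(a * d - b * c) * (snd p - snd q) = 0" by simp
    with D have "snd p = snd q" by (metis abs_0 eq_iff_diff_eq_0 mult_eq_0_iff zero_neq_one)
    with x show "p = q" by (simp add: prod_eq_iff)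
  qed
  have injw: "\<And>i j. i < length ws \<Longrightarrow> j < length ws \<Longrightarrow> ws ! i = ws ! j \<longleftrightarrow> i = j"
    using nth_inj[OF smw] by blast
  have nefw': "\<And>r. 0 < r \<Longrightarrow> Suc r < length ws \<Longrightarrow> det2 (ws ! (r - 1)) (ws ! Suc r) \<le> 2"
    using nefw unfolding nef_iff[OF smw] by blast
  show ?thesis unfolding nef_iff[OF smv]
  proof (intro allI impI)
    fix i assume i: "0 < i \<and> Suc i < length vs"
    define u v w where "u = vs ! (i - 1)" "v = vs ! i" "w = vs ! Suc i"
    have "{u, v} \<in> max_cones vs" unfolding mc_iff u_v_w_def
      by (rule exI[of _ "i - 1"]) (use i in auto)
    then have "L ` {u, v} \<in> max_cones ws" by (rule img')
    then obtain k where k: "{L u, L v} = {ws ! k, ws ! Suc k}" "Suc k < length ws"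
      unfolding mc_iff by auto
    have "{v, w} \<in> max_cones vs" unfolding mc_iff u_v_w_def using i by auto
    then have "L ` {v, w} \<in> max_cones ws" by (rule img')
    then obtain l where l: "{L v, L w} = {ws ! l, ws ! Suc l}" "Suc l < length ws"
      unfolding mc_iff by auto
    have "i - 1 < length vs" "i - 1 \<noteq> Suc i" using i by auto
    then have uw: "u \<noteq> w" unfolding u_v_w_def using nth_inj[OF smv, of "i - 1" "Suc i"] i by blast
    then have Luw: "L u \<noteq> L w" using Linj by blast
    have duw: "det2 u w > 0" unfolding u_v_w_def using det_pos[OF smv, of "i - 1" "Suc i"] i by auto
    have "\<exists>r. 0 < r \<and> Suc r < length ws \<and>
        ((L u = ws ! (r - 1) \<and> L w = ws ! Suc r) \<or> (L u = ws ! Suc r \<and> L w = ws ! (r - 1)))"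
    proof -
      have A: "(L u = ws ! k \<and> L v = ws ! Suc k) \<or> (L u = ws ! Suc k \<and> L v = ws ! k)"
        using k(1) by (auto simp: doubleton_eq_iff)
      have B: "(L v = ws ! l \<and> L w = ws ! Suc l) \<or> (L v = ws ! Suc l \<and> L w = ws ! l)"
        using l(1) by (auto simp: doubleton_eq_iff)
      from A B show ?thesis
      proof (elim disjE conjE)
        assume h: "L u = ws ! k" "L v = ws ! Suc k" "L v = ws ! l" "L w = ws ! Suc l"
        then have "Suc k = l" using injw k(2) l(2) by (metis Suc_lessD)
        then show ?thesis using h l(2) by (intro exI[of _ "Suc k"]) auto
      next
        assume h: "L u = ws ! k" "L v = ws ! Suc k" "L v = ws ! Suc l" "L w = ws ! l"
        then have "k = l" using injw k(2) l(2) by (metis Suc_inject)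
        then show ?thesis using h Luw by simp
      next
        assume h: "L u = ws ! Suc k" "L v = ws ! k" "L v = ws ! l" "L w = ws ! Suc l"
        then have "k = l" using injw k(2) l(2) by (metis Suc_lessD)
        then show ?thesis using h Luw by simp
      next
        assume h: "L u = ws ! Suc k" "L v = ws ! k" "L v = ws ! Suc l" "L w = ws ! l"
        then have "k = Suc l" using injw k(2) l(2) by (metis Suc_lessD)
        then show ?thesis using h k(2) by (intro exI[of _ k]) auto
      qed
    qed
    then obtain r where r: "0 < r" "Suc r < length ws"
      "(L u = ws ! (r - 1) \<and> L w = ws ! Suc r) \<or> (L u = ws ! Suc r \<and> L w = ws ! (r - 1))"
      by blast
    have dr: "det2 (ws ! (r - 1)) (ws ! Suc r) \<le> 2" using nefw' r by blast
    have dr0: "det2 (ws ! (r - 1)) (ws ! Suc r) > 0" using det_pos[OF smw, of "r - 1" "Suc r"] r by simp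
    have "\<bar>det2 (L u) (L w)\<bar> = det2 u w" using detL D duw by (simp add: abs_mult)
    moreover have "\<bar>det2 (L u) (L w)\<bar> = \<bar>det2 (ws ! (r - 1)) (ws ! Suc r)\<bar>"
      using r(3) det_antisym[of "ws ! Suc r" "ws ! (r - 1)"] by auto
    ultimately show "det2 (vs ! (i - 1)) (vs ! Suc i) \<le> 2" using dr dr0 unfolding u_v_w_def by simp
  qed
qed


lemma f_id: "(\<lambda>(x::int, y::int). (1 * x + 0 * y, 0 * x + 1 * y)) = id" by (simp add: fun_eq_iff split_beta)

lemma f_swap: "(\<lambda>(x::int, y::int). (0 * x + 1 * y, 1 * x + 0 * y)) = prod.swap" by (simp add: fun_eq_iff split_beta)

lemma iso_refl: "toric_iso vs vs"
  unfolding toric_iso_def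
  apply (rule exI[of _ 1], rule exI[of _ 0], rule exI[of _ 0], rule exI[of _ 1])
  apply (simp only: f_id)
  apply simp
  done

lemma iso_mirror: "toric_iso (rev (map prod.swap ws)) ws"
proof -
  define N where "N = length ws"
  define rws where "rws = rev (map prod.swap ws)"
  have rn: "\<And>i. i < N \<Longrightarrow> rws ! i = prod.swap (ws ! (N - Suc i))"
    unfolding rws_def N_def by (simp add: rev_nth)
  have lr: "length rws = N" unfolding rws_def N_def by simp
  have key: "\<And>i. Suc i < N \<Longrightarrow> prod.swap ` {rws ! i, rws ! Suc i} = {ws ! (N - 2 - i), ws ! Suc (N - 2 - i)}"
  proof -
    fix i assume i: "Suc i < N"
    have a: "N - Suc i = Suc (N - 2 - i)" "N - Suc (Suc i) = N - 2 - i" using i by arith+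
    have b: "rws ! i = prod.swap (ws ! Suc (N - 2 - i))"
      using rn[of i, OF Suc_lessD[OF i], unfolded a(1)] .
    have c: "rws ! Suc i = prod.swap (ws ! (N - 2 - i))" using rn[of "Suc i", OF i, unfolded a(2)] .
    show "prod.swap ` {rws ! i, rws ! Suc i} = {ws ! (N - 2 - i), ws ! Suc (N - 2 - i)}"
      unfolding b c by auto
  qed
  have M: "(\<lambda>S. prod.swap ` S) ` max_cones rws = max_cones ws"
  proof (rule set_eqI, rule iffI)
    fix X assume "X \<in> (\<lambda>S. prod.swap ` S) ` max_cones rws"
    then obtain S where S: "S \<in> max_cones rws" "X = prod.swap ` S" by blast
    from S(1) obtain i where i0: "Suc i < N" "S = {rws ! i, rws ! Suc i}"
      unfolding mc_iff lr by blast
    have i: "Suc i < N" "X = prod.swap ` {rws ! i, rws ! Suc i}" using i0 S by auto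
    then have "X = {ws ! (N - 2 - i), ws ! Suc (N - 2 - i)}" using key by simp
    moreover have "Suc (N - 2 - i) < length ws" using i unfolding N_def by simp
    ultimately show "X \<in> max_cones ws" unfolding mc_iff by blast
  next
    fix X assume "X \<in> max_cones ws"
    then obtain j where j: "Suc j < N" "X = {ws ! j, ws ! Suc j}" unfolding mc_iff N_def by auto
    define i where "i = N - 2 - j"
    have i: "Suc i < N" "N - 2 - i = j" using j unfolding i_def by auto
    have "X = prod.swap ` {rws ! i, rws ! Suc i}" using key[OF i(1)] i(2) j(2) by simp
    moreover have "{rws ! i, rws ! Suc i} \<in> max_cones rws" unfolding mc_iff lr using i by blast
    ultimately show "X \<in> (\<lambda>S. prod.swap ` S) ` max_cones rws" by blast
  qed
  show ?thesis unfolding toric_iso_def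
    apply (rule exI[of _ 0], rule exI[of _ 1], rule exI[of _ 1], rule exI[of _ 0])
    apply (simp only: f_swap)
    apply (simp add: M[unfolded rws_def])
    done
qed


lemma classify:
  assumes sm: "smooth_quadrant_fan vs"
    and nef: "\<forall>i. 0 < i \<and> Suc i < length vs \<longrightarrow> det2 (vs ! (i - 1)) (vs ! Suc i) \<le> 2"
  shows "vs = A2_fan \<or> (\<exists>m\<ge>1. vs = Z_fan m \<or> vs = rev (map prod.swap (Z_fan m)))"
proof -
  define n where "n = length vs - 2"
  have len: "length vs = n + 2" using sm unfolding smooth_quadrant_fan_def n_def by auto
  define x where "x i = fst (vs ! i)" for i
  define y where "y i = snd (vs ! i)" for i
  define a where "a i = det2 (vs ! (i - 1)) (vs ! Suc i)" for i
  have vx: "\<And>i. vs ! i = (x i, y i)" by (simp add: x_def y_def)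
  have ne: "vs \<noteq> []" using len by auto
  have v0: "vs ! 0 = (1, 0)" using sm ne unfolding smooth_quadrant_fan_def by (simp add: hd_conv_nth)
  have vl: "vs ! (n + 1) = (0, 1)" using sm ne len unfolding smooth_quadrant_fan_def
    by (simp add: last_conv_nth)
  have x0: "x 0 = 1" and y0: "y 0 = 0" using v0 by (simp_all add: x_def y_def)
  have xl: "x (n + 1) = 0" and yl: "y (n + 1) = 1" using vl by (simp_all add: x_def y_def)
  have dt: "\<And>i. i \<le> n \<Longrightarrow> x i * y (Suc i) - y i * x (Suc i) = 1"
  proof -
    fix i assume "i \<le> n"
    then have "Suc i < length vs" using len by simp
    from sm_det[OF sm this] show "x i * y (Suc i) - y i * x (Suc i) = 1"
      by (simp add: x_def y_def det2_def)
  qed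
  have pos: "\<And>i. 1 \<le> i \<Longrightarrow> i \<le> n \<Longrightarrow> x i \<ge> 1 \<and> y i \<ge> 1"
  proof -
    fix i assume i: "1 \<le> i" "i \<le> n"
    have "det2 (vs ! 0) (vs ! i) > 0" using det_pos[OF sm, of 0 i] i len by simp
    then have "y i > 0" using v0 by (simp add: det2_def y_def)
    moreover have "det2 (vs ! i) (vs ! (n + 1)) > 0" using det_pos[OF sm, of i "n + 1"] i len by simp
    then have "x i > 0" using vl by (simp add: det2_def x_def)
    ultimately show "x i \<ge> 1 \<and> y i \<ge> 1" by simp
  qed
  have rec: "\<And>i. 1 \<le> i \<Longrightarrow> i \<le> n \<Longrightarrow> x (i - 1) + x (Suc i) = a i * x i \<and> y (i - 1) + y (Suc i) = a i * y i"
  proof -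
    fix i assume i: "1 \<le> i" "i \<le> n"
    have h1: "det2 (vs ! (i - 1)) (vs ! i) = 1" using sm_det[OF sm, of "i - 1"] i len by simp
    have h2: "det2 (vs ! i) (vs ! Suc i) = 1" using sm_det[OF sm, of i] i len by simp
    show "x (i - 1) + x (Suc i) = a i * x i \<and> y (i - 1) + y (Suc i) = a i * y i"
      using det_ident1[of "vs ! (i - 1)" "vs ! i" "vs ! Suc i"] det_ident2[of "vs ! (i - 1)" "vs ! i" "vs ! Suc i"]
        h1 h2 unfolding a_def x_def y_def by simp
  qed
  have ar: "\<And>i. 1 \<le> i \<Longrightarrow> i \<le> n \<Longrightarrow> 1 \<le> a i \<and> a i \<le> 2"
  proof -
    fix i assume i: "1 \<le> i" "i \<le> n"
    have "a i \<le> 2" using nef i len unfolding a_def by simp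
    moreover have "a i > 0" using det_pos[OF sm, of "i - 1" "Suc i"] i len unfolding a_def by simp
    ultimately show "1 \<le> a i \<and> a i \<le> 2" by simp
  qed
  show ?thesis
  proof (cases "n = 0")
    case True
    have "vs = A2_fan"
    proof (rule nth_equalityI)
      show "length vs = length A2_fan" using len True by (simp add: A2_fan_def)
      fix i assume "i < length vs"
      then have "i = 0 \<or> i = 1" using len True by auto
      then show "vs ! i = A2_fan ! i" using v0 vl True by (auto simp: A2_fan_def)
    qed
    then show ?thesis by simp
  next
    case False
    then have n1: "n \<ge> 1" by simp
    have y1: "y 1 = 1" using dt[of 0] x0 y0 by simp
    have xn: "x n = 1" using dt[of n] xl yl by simp
    show ?thesis
    proof (cases "x 1 = 1")
      case True
      have cl: "\<And>k. k \<le> n \<Longrightarrow> (\<forall>i\<le>k. x i = 1 \<and> y i = int i)"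
      proof -
        fix k show "k \<le> n \<Longrightarrow> (\<forall>i\<le>k. x i = 1 \<and> y i = int i)"
        proof (induction k)
          case 0 then show ?case using x0 y0 by simp
        next
          case (Suc k)
          then have IH: "\<forall>i\<le>k. x i = 1 \<and> y i = int i" by simp
          have "x (Suc k) = 1 \<and> y (Suc k) = int (Suc k)"
          proof (cases "k = 0")
            case True then show ?thesis using \<open>x 1 = 1\<close> y1 by simp
          next
            case False
            then have k1: "1 \<le> k" "k \<le> n" using Suc.prems by auto
            have r: "x (k - 1) + x (Suc k) = a k * x k \<and> y (k - 1) + y (Suc k) = a k * y k"
              using rec[OF k1] .
            have "x (k - 1) = 1" "y (k - 1) = int k - 1" using IH k1 by (auto simp: of_nat_diff)
            moreover have "x k = 1" "y k = int k" using IH by auto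
            ultimately have e: "1 + x (Suc k) = a k" "int k - 1 + y (Suc k) = a k * int k" using r by auto
            have "x (Suc k) \<ge> 1" using pos[of "Suc k"] Suc.prems by simp
            then have "a k = 2" using ar[OF k1] e(1) by simp
            then show ?thesis using e by simp
          qed
          then show ?case using IH le_Suc_eq by blast
        qed
      qed
      have "vs = Z_fan n"
      proof (rule nth_equalityI)
        show "length vs = length (Z_fan n)" using len by (simp add: Z_len)
        fix i assume "i < length vs"
        then have i: "i \<le> n + 1" using len by simp
        show "vs ! i = Z_fan n ! i"
        proof (cases "i \<le> n")
          case True
          then show ?thesis using cl[OF order_refl] Z_nth[OF i] vx[of i] v0 by auto
        next
          case False
          then have "i = n + 1" using i by simp
          then show ?thesis using Z_nth[OF i] vl by simp
        qed
      qed
      then show ?thesis using n1 by blast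
    next
      case False
      then have p2: "x 1 \<ge> 2" using pos[of 1] n1 by simp
      define p where "p = x 1"
      have a1: "a 1 = 1"
      proof (rule ccontr)
        assume "a 1 \<noteq> 1"
        then have a12: "a 1 = 2" using ar[of 1] n1 by simp
        have prefix: "\<And>k. k \<le> n + 1 \<Longrightarrow> (\<forall>j. 1 \<le> j \<and> j < k \<longrightarrow> a j = 2) \<Longrightarrow>
            (\<forall>i\<le>k. x i = 1 + int i * (p - 1) \<and> y i = int i)"
        proof -
          fix k show "k \<le> n + 1 \<Longrightarrow> (\<forall>j. 1 \<le> j \<and> j < k \<longrightarrow> a j = 2) \<Longrightarrow>
            (\<forall>i\<le>k. x i = 1 + int i * (p - 1) \<and> y i = int i)"
          proof (induction k)
            case 0 then show ?case using x0 y0 by simp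
          next
            case (Suc k)
            then have IH: "\<forall>i\<le>k. x i = 1 + int i * (p - 1) \<and> y i = int i" by simp
            have "x (Suc k) = 1 + int (Suc k) * (p - 1) \<and> y (Suc k) = int (Suc k)"
            proof (cases "k = 0")
              case True then show ?thesis using y1 p_def by simp
            next
              case False
              then have k1: "1 \<le> k" "k \<le> n" using Suc.prems by auto
              have ak: "a k = 2" using Suc.prems(2) k1 by simp
              have r: "x (k - 1) + x (Suc k) = a k * x k \<and> y (k - 1) + y (Suc k) = a k * y k"
                using rec[OF k1] .
              have "x (k - 1) = 1 + (int k - 1) * (p - 1)" "y (k - 1) = int k - 1"
                using IH k1 by (auto simp: of_nat_diff)
              moreover have "x k = 1 + int k * (p - 1)" "y k = int k" using IH by auto
              ultimately have e: "x (Suc k) = 2 * (1 + int k * (p - 1)) - (1 + (int k - 1) * (p - 1))"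
                "y (Suc k) = 2 * int k - (int k - 1)" using r ak by auto
              then show ?thesis by (simp add: algebra_simps)
            qed
            then show ?case using IH le_Suc_eq by blast
          qed
        qed
        show False
        proof (cases "\<forall>j. 1 \<le> j \<and> j \<le> n \<longrightarrow> a j = 2")
          case True
          then have "\<forall>j. 1 \<le> j \<and> j < n + 1 \<longrightarrow> a j = 2" by simp
          from prefix[OF order_refl this] have "y (n + 1) = int (n + 1)" by blast
          then show False using yl n1 by simp
        next
          case False
          then have "\<exists>j. 1 \<le> j \<and> j \<le> n \<and> a j \<noteq> 2" by blast
          then obtain k where k: "1 \<le> k \<and> k \<le> n \<and> a k \<noteq> 2"
            and kmin: "\<forall>m<k. \<not> (1 \<le> m \<and> m \<le> n \<and> a m \<noteq> 2)"
            using exists_least_iff[of "\<lambda>j. 1 \<le> j \<and> j \<le> n \<and> a j \<noteq> 2"] by blast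
          have k1: "1 \<le> k" "k \<le> n" using k by auto
          have ak: "a k = 1" using ar[OF k1] k by simp
          have k2: "k \<ge> 2" using k a12 by (cases "k = 1") auto
          have below: "\<forall>j. 1 \<le> j \<and> j < k \<longrightarrow> a j = 2" using kmin k1 by auto
          have P: "\<forall>i\<le>k. x i = 1 + int i * (p - 1) \<and> y i = int i" using prefix[of k] k1 below by simp
          have "y (k - 1) = int k - 1" "y k = int k" using P k1 by (auto simp: of_nat_diff)
          then have ysk: "y (Suc k) = 1" using rec[OF k1] ak by simp
          show False
          proof (cases "k < n")
            case True
            have k1': "1 \<le> Suc k" "Suc k \<le> n" using True by auto
            have "y k + y (Suc (Suc k)) = a (Suc k) * y (Suc k)" using rec[OF k1'] by simp
            then have "y (Suc (Suc k)) \<le> 2 - int k" using ar[OF k1'] ysk \<open>y k = int k\<close> by simp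
            moreover have "y (Suc (Suc k)) \<ge> 1"
            proof (cases "Suc (Suc k) \<le> n")
              case True then show ?thesis using pos[of "Suc (Suc k)"] by simp
            next
              case False then have "Suc (Suc k) = n + 1" using True by simp
              then show ?thesis using yl by simp
            qed
            ultimately show False using k2 by simp
          next
            case False
            then have "k = n" using k1 by simp
            then have "x n = 1 + int n * (p - 1)" using P by simp
            moreover have "int n * (p - 1) \<ge> 1 * 1"
              using n1 p2 p_def by (intro mult_mono) auto
            ultimately show False using xn by linarith
          qed
        qed
      qed
      have ycl: "\<And>k. k \<le> n + 1 \<Longrightarrow> (\<forall>i. 1 \<le> i \<and> i \<le> k \<longrightarrow> y i = 1)"
      proof -
        fix k show "k \<le> n + 1 \<Longrightarrow> (\<forall>i. 1 \<le> i \<and> i \<le> k \<longrightarrow> y i = 1)"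
        proof (induction k)
          case 0 then show ?case by simp
        next
          case (Suc k)
          then have IH: "\<forall>i. 1 \<le> i \<and> i \<le> k \<longrightarrow> y i = 1" by simp
          have "y (Suc k) = 1"
          proof (cases "k = 0")
            case True then show ?thesis using y1 by simp
          next
            case False
            then have k1: "1 \<le> k" "k \<le> n" using Suc.prems by auto
            have r: "y (k - 1) + y (Suc k) = a k * y k" using rec[OF k1] by simp
            have yk: "y k = 1" using IH k1 by simp
            show ?thesis
            proof (cases "k = 1")
              case True then show ?thesis using r a1 y0 yk by simp
            next
              case False
              then have "y (k - 1) = 1" using IH k1 by simp
              then have le: "y (Suc k) \<le> 1" using r yk ar[OF k1] by simp
              have "y (Suc k) \<ge> 1"
              proof (cases "Suc k \<le> n")
                case True then show ?thesis using pos[of "Suc k"] by simp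
              next
                case False then have "Suc k = n + 1" using Suc.prems by simp
                then show ?thesis using yl by simp
              qed
              then show ?thesis using le by simp
            qed
          qed
          then show ?case using IH le_Suc_eq by blast
        qed
      qed
      have xcl: "\<And>t. t \<le> n \<Longrightarrow> x (n + 1 - t) = int t"
      proof -
        fix t show "t \<le> n \<Longrightarrow> x (n + 1 - t) = int t"
        proof (induction t)
          case 0 then show ?case using xl by simp
        next
          case (Suc t)
          define i where "i = n - t"
          have i: "1 \<le> i" "i \<le> n" "n + 1 - Suc t = i" "Suc i = n + 1 - t" using Suc.prems unfolding i_def by auto
          have "x (Suc i) = int t" using Suc i by simp
          moreover have "y i = 1" "y (Suc i) = 1" using ycl[OF order_refl] i by auto
          ultimately have "x i = int t + 1" using dt[OF i(2)] by simp
          then show ?case using i(3) by simp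
        qed
      qed
      have "vs = rev (map prod.swap (Z_fan n))"
      proof (rule nth_equalityI)
        show "length vs = length (rev (map prod.swap (Z_fan n)))" using len by (simp add: Z_len)
        fix i assume "i < length vs"
        then have i: "i < n + 2" using len by simp
        have r: "rev (map prod.swap (Z_fan n)) ! i = prod.swap (Z_fan n ! (n + 1 - i))"
          using i by (simp add: rev_nth Z_len)
        have i': "n + 1 - i \<le> n + 1" by simp
        show "vs ! i = rev (map prod.swap (Z_fan n)) ! i"
        proof (cases "i = 0")
          case True then show ?thesis using r v0 Z_nth[OF i'] by simp
        next
          case False
          show ?thesis
          proof (cases "i = n + 1")
            case True then show ?thesis using r vl Z_nth[OF i'] by simp
          next
            case False
            then have ii: "1 \<le> i" "i \<le> n" using \<open>i \<noteq> 0\<close> i by auto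
            then have t: "n + 1 - i \<le> n" "n + 1 - (n + 1 - i) = i" "n + 1 - i \<noteq> 0" by auto
            have "x i = int (n + 1 - i)" using xcl[OF t(1)] t(2) by simp
            moreover have "y i = 1" using ycl[OF order_refl] ii by simp
            moreover have "Z_fan n ! (n + 1 - i) = (1, int (n + 1 - i))" using Z_nth[OF i'] t by simp
            ultimately show ?thesis using r vx[of i] by simp
          qed
        qed
      qed
      then show ?thesis using n1 by blast
    qed
  qed
qed


theorem lemma5p5:
  shows "smooth_quadrant_fan A2_fan \<and> (\<forall>m\<ge>1. smooth_quadrant_fan (Z_fan m)) \<and>
         (\<forall>vs. smooth_quadrant_fan vs \<longrightarrow>
           (nef_anticanonical vs \<longleftrightarrow>
             toric_iso vs A2_fan \<or> (\<exists>m\<ge>1. toric_iso vs (Z_fan m))))"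
proof (intro conjI allI impI)
  show "smooth_quadrant_fan A2_fan" by (rule A2_smooth)
next
  fix m :: nat assume "m \<ge> 1" then show "smooth_quadrant_fan (Z_fan m)" by (rule Z_smooth)
next
  fix vs assume sm: "smooth_quadrant_fan vs"
  show "nef_anticanonical vs \<longleftrightarrow> toric_iso vs A2_fan \<or> (\<exists>m\<ge>1. toric_iso vs (Z_fan m))"
  proof
    assume "nef_anticanonical vs"
    then have "\<forall>i. 0 < i \<and> Suc i < length vs \<longrightarrow> det2 (vs ! (i - 1)) (vs ! Suc i) \<le> 2"
      using nef_iff[OF sm] by blast
    from classify[OF sm this]
    show "toric_iso vs A2_fan \<or> (\<exists>m\<ge>1. toric_iso vs (Z_fan m))"
      using iso_refl iso_mirror by metis
  next
    assume "toric_iso vs A2_fan \<or> (\<exists>m\<ge>1. toric_iso vs (Z_fan m))"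
    then show "nef_anticanonical vs"
    proof
      assume "toric_iso vs A2_fan"
      then show ?thesis using iso_nef[OF sm A2_smooth _ A2_nef] by blast
    next
      assume "\<exists>m\<ge>1. toric_iso vs (Z_fan m)"
      then obtain m where m: "m \<ge> 1" "toric_iso vs (Z_fan m)" by blast
      then show ?thesis using iso_nef[OF sm Z_smooth[OF m(1)] _ Z_nef[OF m(1)]] by blast
    qed
  qed
qed

end
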